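(* Let $\mathbf x,\mathbf y\in(\Sigma^* )^\circ$ and let $\mathbf s=-g(\mathbf x)$, $\mathbf t=-g(\mathbf y)$. If $\|\mathbf x-\mathbf y\|_{\mathbf x}<\tfrac12$, then $\mathbf x$ certifies $\mathbf t$, i.e. $H(\mathbf x)^{-1}\mathbf t\in\Sigma^*$.
   Context: Fix nonzero real polynomials $g_1,\dots,g_m$ in $n$ variables and nonnegative integers $d_1,\dots,d_m$. Let $\mathcal V$ be the real vector space of polynomials $\sum_{i=1}^m g_i r_i$ with $\deg r_i\le 2d_i$, and $\Sigma\subseteq\mathcal V$ the cone of weighted sums of squares $\sum_i g_i\sigma_i$ with each $\sigma_i$ a sum of squares of polynomials of degree at most $d_i$; assume $\Sigma$ is a proper cone. Fix a basis $\mathbf q=(q_1,\dots,q_U)$ of $\mathcal V$, identify $\mathcal V$ and its dual with $\mathbb R^U$ with the standard inner product and Euclidean norm $\|\cdot\|$; $\Sigma^*$ is the dual cone, $K^\circ$ the interior of $K$. For each $i$ fix a basis $\mathbf p_i$ (of size $L_i$) of polynomials of degree at most $d_i$ and let $\Lambda_i:\mathbb R^U\to\mathbb S^{L_i}$ be the unique linear map with $\sum_u q_u\Lambda_i(\mathbf e_u)=g_i\mathbf p_i\mathbf p_i^T$; $\Lambda=\Lambda_1\oplus\cdots\oplus\Lambda_m$ (block diagonal), $\Lambda^*$ its adjoint. Then $(\Sigma^* )^\circ=\{\mathbf x:\Lambda(\mathbf x)\succ0\}$ and $\Sigma^*=\{\mathbf x:\Lambda(\mathbf x)\succeq0\}$.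 On $(\Sigma^* )^\circ$ let $f(\mathbf x)=-\ln\det\Lambda(\mathbf x)$, with gradient $g(\mathbf x)=-\Lambda^*(\Lambda(\mathbf x)^{-1})$ (not to be confused with the weights $g_i$) and Hessian $H(\mathbf x)\mathbf w=\Lambda^*(\Lambda(\mathbf x)^{-1}\Lambda(\mathbf w)\Lambda(\mathbf x)^{-1})$, positive definite. The local norm is $\|\mathbf v\|_{\mathbf x}=\|H(\mathbf x)^{1/2}\mathbf v\|$. *)

theory Defs
  imports "HOL-Analysis.Analysis" "HOL-Library.Poly_Mapping"
begin

type_synonym 'v mpoly = "('v \<Rightarrow>\<^sub>0 nat) \<Rightarrow>\<^sub>0 real"

definition tdeg :: "'v mpoly \<Rightarrow> nat" where
  "tdeg p = Max (insert 0 ((\<lambda>a. sum (Poly_Mapping.lookup a) (Poly_Mapping.keys a)) ` Poly_Mapping.keys p))"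

definition psmult :: "real \<Rightarrow> 'v mpoly \<Rightarrow> 'v mpoly" where
  "psmult c p = Poly_Mapping.map (\<lambda>a. c * a) p"

definition polys_le :: "nat \<Rightarrow> 'v mpoly set" where
  "polys_le d = {p. tdeg p \<le> d}"

definition fam_basis_on :: "'i set \<Rightarrow> ('i \<Rightarrow> 'v mpoly) \<Rightarrow> 'v mpoly set \<Rightarrow> bool" where
  "fam_basis_on S b B \<longleftrightarrow> finite S \<and>
     (\<forall>c. (\<Sum>i\<in>S. psmult (c i) (b i)) = 0 \<longrightarrow> (\<forall>i\<in>S. c i = 0)) \<and>
     {(\<Sum>i\<in>S. psmult (c i) (b i)) | c. True} = B"

definition sos_le :: "nat \<Rightarrow> 'v mpoly set" where
  "sos_le d = {(\<Sum>h\<leftarrow>hs. h * h) | hs. \<forall>h\<in>set hs. tdeg h \<le> d}"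

definition Vspace :: "('m::finite \<Rightarrow> 'v mpoly) \<Rightarrow> ('m \<Rightarrow> nat) \<Rightarrow> 'v mpoly set" where
  "Vspace g d = {(\<Sum>i\<in>UNIV. g i * r i) | r. \<forall>i. tdeg (r i) \<le> 2 * d i}"

definition WSOS :: "('m::finite \<Rightarrow> 'v mpoly) \<Rightarrow> ('m \<Rightarrow> nat) \<Rightarrow> 'v mpoly set" where
  "WSOS g d = {(\<Sum>i\<in>UNIV. g i * \<sigma> i) | \<sigma>. \<forall>i. \<sigma> i \<in> sos_le (d i)}"

text \<open>Identification of R^U with V via the basis q.\<close>
definition lincomb :: "('u::finite \<Rightarrow> 'v mpoly) \<Rightarrow> real^'u \<Rightarrow> 'v mpoly" where
  "lincomb q x = (\<Sum>u\<in>UNIV. psmult (x $ u) (q u))"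

definition Sigma_vec :: "('u::finite \<Rightarrow> 'v mpoly) \<Rightarrow> ('m::finite \<Rightarrow> 'v mpoly) \<Rightarrow> ('m \<Rightarrow> nat)
    \<Rightarrow> (real^'u) set" where
  "Sigma_vec q g d = {x. lincomb q x \<in> WSOS g d}"

definition proper_cone :: "'a::euclidean_space set \<Rightarrow> bool" where
  "proper_cone K \<longleftrightarrow> convex_cone K \<and> closed K \<and> interior K \<noteq> {} \<and> K \<inter> uminus ` K = {0}"

definition dual_cone :: "'a::real_inner set \<Rightarrow> 'a set" where
  "dual_cone K = {y. \<forall>x\<in>K. 0 \<le> inner x y}"

text \<open>Lambda(x) = sum_u x_u Lambda(e_u); here the block-diagonal Lambda is one matrix
  whose rows are indexed by 'r, row r belonging to block blk r.\<close>
definition LamX :: "('u::finite \<Rightarrow> real^'r^'r) \<Rightarrow> real^'u \<Rightarrow> real^'r^'r" where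
  "LamX Lam x = (\<Sum>u\<in>UNIV. x $ u *\<^sub>R Lam u)"

text \<open>Adjoint of Lambda w.r.t. the trace (Frobenius) inner product.\<close>
definition Lam_adj :: "('u::finite \<Rightarrow> real^'r^'r) \<Rightarrow> real^'r^'r \<Rightarrow> real^'u" where
  "Lam_adj Lam M = (\<chi> u. trace (transpose (Lam u) ** M))"

definition grad :: "('u::finite \<Rightarrow> real^'r^'r) \<Rightarrow> real^'u \<Rightarrow> real^'u" where
  "grad Lam x = - Lam_adj Lam (matrix_inv (LamX Lam x))"

text \<open>Hessian as a U x U matrix: column w is H(x) e_w.\<close>
definition hess :: "('u::finite \<Rightarrow> real^'r^'r) \<Rightarrow> real^'u \<Rightarrow> real^'u^'u" where
  "hess Lam x = (\<chi> u w. Lam_adj Lam (matrix_inv (LamX Lam x) ** LamX Lam (axis w 1)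
                                       ** matrix_inv (LamX Lam x)) $ u)"

definition psd_mat :: "real^'n^'n \<Rightarrow> bool" where
  "psd_mat A \<longleftrightarrow> transpose A = A \<and> (\<forall>v. 0 \<le> v \<bullet> (A *v v))"

definition mat_sqrt :: "real^'n^'n \<Rightarrow> real^'n^'n" where
  "mat_sqrt A = (THE R. psd_mat R \<and> R ** R = A)"

definition local_norm :: "('u::finite \<Rightarrow> real^'r^'r) \<Rightarrow> real^'u \<Rightarrow> real^'u \<Rightarrow> real" where
  "local_norm Lam x v = norm (mat_sqrt (hess Lam x) *v v)"

end

theory Submission
  imports Defs
begin


lemma quad_zero:
  fixes c k :: real
  assumes "\<And>t. 0 \<le> 2*t*c + t^2*k"
  shows "c = 0"
proof (rule ccontr)
  assume c: "c \<noteq> 0"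
  define t where "t = - c / (\<bar>k\<bar> + 1)"
  have pos: "\<bar>k\<bar> + 1 > 0" by simp
  have "0 \<le> 2*t*c + t^2*k" by (rule assms)
  hence "0 \<le> (2*t*c + t^2*k) * (\<bar>k\<bar>+1)^2" by simp
  also have "(2*t*c + t^2*k) * (\<bar>k\<bar>+1)^2 = -(c^2 * (2*(\<bar>k\<bar> + 1) - k))"
  proof -
    define K where "K = \<bar>k\<bar> + 1"
    have "K \<noteq> 0" using pos K_def by simp
    hence "(2*(-c/K)*c + (-c/K)^2*k) * K^2 = -(c^2 * (2*K - k))"
      by (simp add: field_simps power2_eq_square)
    thus ?thesis unfolding t_def K_def .
  qed
  finally have "c^2 * (2*\<bar>k\<bar> + 2 - k) \<le> 0" by simp
  moreover have "2*\<bar>k\<bar> + 2 - k > 0" by linarith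
  moreover have "c^2 > 0" using c by simp
  ultimately show False by (simp add: mult_le_0_iff)
qed

lemma inner_mat_sym:
  fixes A :: "real^'n^'n"
  assumes "transpose A = A"
  shows "inner x (A *v y) = inner (A *v x) y"
proof -
  have "inner x (A *v y) = inner (x v* A) y" by (simp add: dot_lmul_matrix)
  also have "x v* A = transpose A *v x" by simp
  finally show ?thesis using assms by simp
qed

definition qf :: "real^'n^'n \<Rightarrow> real^'n \<Rightarrow> real" where
  "qf A v = inner v (A *v v)"

lemma qf_add:
  fixes A :: "real^'n^'n"
  assumes "transpose A = A"
  shows "qf A (v + t *\<^sub>R w) = qf A v + 2*t*inner w (A *v v) + t^2 * qf A w"
proof -
  have s: "inner v (A *v w) = inner w (A *v v)"
    using inner_mat_sym[OF assms, of v w] by (simp add: inner_commute)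
  show ?thesis
    unfolding qf_def
    by (simp add: matrix_vector_right_distrib matrix_vector_mult_scaleR inner_add_left inner_add_right
        s power2_eq_square algebra_simps)
qed

lemma qf_scale: "qf A (c *\<^sub>R v) = c^2 * qf A v"
  by (simp add: qf_def matrix_vector_mult_scaleR power2_eq_square)

lemma psd_null:
  fixes A :: "real^'n^'n"
  assumes "transpose A = A" "\<And>v. 0 \<le> qf A v" "qf A v = 0"
  shows "A *v v = 0"
proof -
  have "\<And>w. inner w (A *v v) = 0"
  proof -
    fix w
    have "\<And>t. 0 \<le> 2*t*inner w (A *v v) + t^2 * qf A w"
    proof -
      fix t :: real
      have "0 \<le> qf A (v + t *\<^sub>R w)" by (rule assms(2))
      thus "0 \<le> 2*t*inner w (A *v v) + t^2 * qf A w"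
        using qf_add[OF assms(1), of v t w] assms(3) by simp
    qed
    thus "inner w (A *v v) = 0" by (rule quad_zero)
  qed
  from this[of "A *v v"] show ?thesis by simp
qed

lemma eig_in_subspace:
  fixes A :: "real^'n^'n"
  assumes sym: "transpose A = A" and S: "subspace S" and inv: "\<And>x. x \<in> S \<Longrightarrow> A *v x \<in> S"
    and ne: "S \<noteq> {0}"
  shows "\<exists>v\<in>S. norm v = 1 \<and> A *v v = qf A v *\<^sub>R v"
proof -
  define K where "K = S \<inter> sphere 0 1"
  have "compact K" unfolding K_def
    by (simp add: S closed_subspace closed_Int_compact)
  moreover obtain x where x: "x \<in> S" "x \<noteq> 0" using ne S subspace_0 by blast
  hence "(1/norm x) *\<^sub>R x \<in> K" unfolding K_def using S by (simp add: subspace_scale)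
  hence "K \<noteq> {}" by blast
  moreover have "continuous_on K (qf A)"
    unfolding qf_def by (intro continuous_intros)
  ultimately obtain v where v: "v \<in> K" and vmax: "\<And>y. y \<in> K \<Longrightarrow> qf A y \<le> qf A v"
    using continuous_attains_sup by metis
  have vS: "v \<in> S" and nv: "norm v = 1" using v K_def by auto
  define lam where "lam = qf A v"
  have orth: "inner w (A *v v) = 0" if w: "w \<in> S" "inner w v = 0" for w
  proof -
    have "\<And>t. 0 \<le> 2*t*(- inner w (A *v v)) + t^2 * (lam * (norm w)^2 - qf A w)"
    proof -
      fix t :: real
      define u where "u = v + t *\<^sub>R w"
      have nu: "(norm u)^2 = 1 + t^2 * (norm w)^2"
      proof -
        have "(norm u)^2 = inner u u" by (simp add: power2_norm_eq_inner)
        also have "\<dots> = inner v v + 2*t*inner w v + t^2 * inner w w"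
          unfolding u_def by (simp add: inner_add_left inner_add_right inner_commute power2_eq_square algebra_simps)
        also have "inner v v = 1" using nv by (simp add: power2_norm_eq_inner[symmetric])
        finally show ?thesis using w(2) by (simp add: power2_norm_eq_inner)
      qed
      hence "(norm u)^2 > 0" by (simp add: add_pos_nonneg)
      hence upos: "norm u > 0" by (metis norm_ge_zero order_le_less power_zero_numeral less_irrefl)
      have uS: "u \<in> S" unfolding u_def using vS w S by (simp add: subspace_add subspace_scale)
      have "(1/norm u) *\<^sub>R u \<in> K" unfolding K_def using uS upos S by (simp add: subspace_scale)
      hence "qf A ((1/norm u) *\<^sub>R u) \<le> lam" using vmax lam_def by blast
      hence "qf A u / (norm u)^2 \<le> lam" by (simp add: qf_scale power_divide)
      hence "qf A u \<le> lam * (norm u)^2" using upos by (simp add: divide_le_eq)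
      moreover have "qf A u = lam + 2*t*inner w (A *v v) + t^2 * qf A w"
        unfolding u_def lam_def by (rule qf_add[OF sym])
      ultimately show "0 \<le> 2*t*(- inner w (A *v v)) + t^2 * (lam * (norm w)^2 - qf A w)"
        using nu by (simp add: algebra_simps)
    qed
    from quad_zero[OF this] show ?thesis by simp
  qed
  define e where "e = A *v v - lam *\<^sub>R v"
  have eS: "e \<in> S" unfolding e_def using inv[OF vS] vS S by (simp add: subspace_diff subspace_scale)
  have vv: "inner v v = 1" using nv by (simp add: power2_norm_eq_inner[symmetric])
  have "inner e v = 0" unfolding e_def lam_def qf_def using vv
    by (simp add: inner_diff_left inner_commute inner_diff_right)
  hence "inner e (A *v v) = 0" using orth eS by blast
  hence "inner e e = 0" using \<open>inner e v = 0\<close> unfolding e_def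
    by (simp add: inner_diff_right)
  hence "e = 0" by simp
  thus ?thesis using vS nv unfolding e_def lam_def by auto
qed



definition orthonormal :: "(real^'n) set \<Rightarrow> bool" where
  "orthonormal B \<longleftrightarrow> (\<forall>b\<in>B. norm b = 1) \<and> pairwise orthogonal B"

lemma spectral_sub:
  fixes A :: "real^'n^'n"
  assumes sym: "transpose A = A"
  shows "subspace S \<Longrightarrow> (\<forall>x\<in>S. A *v x \<in> S) \<Longrightarrow>
    \<exists>B. B \<subseteq> S \<and> finite B \<and> orthonormal B \<and> (\<forall>b\<in>B. A *v b = qf A b *\<^sub>R b) \<and> span B = S"
proof (induction "dim S" arbitrary: S rule: less_induct)
  case less
  show ?case
  proof (cases "S \<subseteq> {0}")
    case True
    hence "S = {0}" using less.prems(1) subspace_0 by blast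
    thus ?thesis by (intro exI[of _ "{}"]) (auto simp: orthonormal_def)
  next
    case False
    hence ne: "S \<noteq> {0}" by blast
    obtain v where vS: "v \<in> S" and nv: "norm v = 1" and ev: "A *v v = qf A v *\<^sub>R v"
      using eig_in_subspace[OF sym less.prems(1) _ ne] less.prems(2) by blast
    have vv: "inner v v = 1" using nv by (simp add: power2_norm_eq_inner[symmetric])
    define S' where "S' = {w\<in>S. inner w v = 0}"
    have sub': "subspace S'" unfolding S'_def subspace_def using less.prems(1)
      by (auto simp: subspace_add subspace_scale subspace_0 inner_add_left)
    have inv': "\<forall>x\<in>S'. A *v x \<in> S'"
    proof
      fix x assume x: "x \<in> S'"
      have "inner (A *v x) v = inner x (A *v v)" using inner_mat_sym[OF sym, of x v] by simp
      also have "\<dots> = 0" using x ev unfolding S'_def by simp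
      finally show "A *v x \<in> S'" using x less.prems(2) unfolding S'_def by auto
    qed
    have "v \<notin> S'" using vv unfolding S'_def by auto
    hence "S' \<subset> S" using vS unfolding S'_def by blast
    hence "span S' \<subset> span S" proof -
      have a: "span S' = S'" using sub' by (metis span_eq_iff)
      have b: "span S = S" using less.prems(1) by (metis span_eq_iff)
      show ?thesis unfolding a b by (rule \<open>S' \<subset> S\<close>)
    qed
    hence "dim S' < dim S" by (rule dim_psubset)
    from less.hyps[OF this sub' inv'] obtain B' where B': "B' \<subseteq> S'" "finite B'" "orthonormal B'"
      "\<forall>b\<in>B'. A *v b = qf A b *\<^sub>R b" "span B' = S'" by blast
    define B where "B = insert v B'"
    have "B \<subseteq> S" using B'(1) vS unfolding B_def S'_def by auto
    moreover have "finite B" using B' B_def by simp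
    moreover have "orthonormal B"
      using B'(1,3) nv unfolding orthonormal_def B_def pairwise_insert S'_def orthogonal_def
      by (auto simp: inner_commute)
    moreover have "\<forall>b\<in>B. A *v b = qf A b *\<^sub>R b" using B'(4) ev B_def by auto
    moreover have "span B = S"
    proof
      show "span B \<subseteq> S" using \<open>B \<subseteq> S\<close> less.prems(1) by (simp add: span_minimal)
      show "S \<subseteq> span B"
      proof
        fix x assume x: "x \<in> S"
        have "x - inner x v *\<^sub>R v \<in> S'" unfolding S'_def using x vS less.prems(1) vv
          by (simp add: subspace_diff subspace_scale inner_diff_left)
        thus "x \<in> span B" unfolding B_def span_breakdown_eq using B'(5) by blast
      qed
    qed
    ultimately show ?thesis by blast
  qed
qed

lemma spectral:
  fixes A :: "real^'n^'n"
  assumes sym: "transpose A = A"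
  shows "\<exists>B. finite B \<and> orthonormal B \<and> (\<forall>b\<in>B. A *v b = qf A b *\<^sub>R b) \<and> span B = UNIV"
  using spectral_sub[OF sym, of UNIV] by auto

lemma orthonormal_expand:
  fixes B :: "(real^'n) set"
  assumes "finite B" "orthonormal B" "span B = UNIV"
  shows "x = (\<Sum>b\<in>B. inner b x *\<^sub>R b)"
proof -
  define y where "y = x - (\<Sum>b\<in>B. inner b x *\<^sub>R b)"
  have ib: "inner c (\<Sum>b\<in>B. inner b x *\<^sub>R b) = inner c x" if c: "c \<in> B" for c
  proof -
    have "inner c (\<Sum>b\<in>B. inner b x *\<^sub>R b) = (\<Sum>b\<in>B. inner b x * inner c b)"
      by (simp add: inner_sum_right)
    also have "\<dots> = (\<Sum>b\<in>B. if b = c then inner c x else 0)"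
    proof (rule sum.cong)
      fix b assume b: "b \<in> B"
      show "inner b x * inner c b = (if b = c then inner c x else 0)"
      proof (cases "b = c")
        case True
        have "inner c c = 1" using assms(2) c unfolding orthonormal_def
          by (simp add: power2_norm_eq_inner[symmetric])
        thus ?thesis using True by simp
      next
        case False
        hence "inner c b = 0" using assms(2) b c unfolding orthonormal_def pairwise_def orthogonal_def by auto
        thus ?thesis using False by simp
      qed
    qed simp
    also have "\<dots> = inner c x" using c assms(1) by simp
    finally show ?thesis .
  qed
  have "\<And>c. c \<in> B \<Longrightarrow> orthogonal y c" unfolding y_def orthogonal_def
  proof -
    fix c assume c: "c \<in> B"
    have "inner (x - (\<Sum>b\<in>B. inner b x *\<^sub>R b)) c = inner c x - inner c (\<Sum>b\<in>B. inner b x *\<^sub>R b)"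
      by (simp add: inner_diff_left inner_commute inner_diff_right)
    also have "\<dots> = 0" using ib[OF c] by simp
    finally show "inner (x - (\<Sum>b\<in>B. inner b x *\<^sub>R b)) c = 0" .
  qed
  hence "orthogonal y y" using orthogonal_to_span[of y B y] assms(3) by auto
  hence "y = 0" by (simp add: orthogonal_def)
  thus ?thesis unfolding y_def by simp
qed

lemma orthonormal_inner_sum:
  fixes B :: "(real^'n) set"
  assumes "finite B" "orthonormal B" "c \<in> B"
  shows "inner c (\<Sum>b\<in>B. f b *\<^sub>R b) = f c"
proof -
  have "inner c (\<Sum>b\<in>B. f b *\<^sub>R b) = (\<Sum>b\<in>B. f b * inner c b)"
    by (simp add: inner_sum_right)
  also have "\<dots> = (\<Sum>b\<in>B. if b = c then f c else 0)"
  proof (rule sum.cong)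
    fix b assume b: "b \<in> B"
    show "f b * inner c b = (if b = c then f c else 0)"
    proof (cases "b = c")
      case True
      have "inner c c = 1" using assms(2,3) unfolding orthonormal_def
        by (simp add: power2_norm_eq_inner[symmetric])
      thus ?thesis using True by simp
    next
      case False
      hence "inner c b = 0" using assms(2,3) b unfolding orthonormal_def pairwise_def orthogonal_def by auto
      thus ?thesis using False by simp
    qed
  qed simp
  also have "\<dots> = f c" using assms(1,3) by simp
  finally show ?thesis .
qed



lemma sum_mulv: "(\<Sum>i\<in>I. f i) *v (x::real^'n) = (\<Sum>i\<in>I. f i *v x)"
  by (induction I rule: infinite_finite_induct) (simp_all add: matrix_vector_mult_add_rdistrib)

lemma mulv_sum: "(A::real^'n^'m) *v (\<Sum>i\<in>I. f i) = (\<Sum>i\<in>I. A *v f i)"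
  by (induction I rule: infinite_finite_induct) (simp_all add: matrix_vector_right_distrib)

lemma transpose_sum: "transpose (\<Sum>i\<in>I. f i) = (\<Sum>i\<in>I. transpose (f i :: real^'n^'m))"
  by (induction I rule: infinite_finite_induct) (simp_all add: transpose_def vec_eq_iff)

definition outer :: "real^'n \<Rightarrow> real^'n^'n" where
  "outer b = (\<chi> i j. b$i * b$j)"

lemma outer_mulv: "outer b *v x = inner b x *\<^sub>R b"
  by (simp add: outer_def matrix_vector_mult_def inner_vec_def vec_eq_iff sum_distrib_left
      sum_distrib_right mult.commute mult.left_commute)

lemma transpose_outer: "transpose (outer b) = outer b"
  by (simp add: outer_def transpose_def vec_eq_iff mult.commute)

lemma mulv_expand:
  fixes A :: "real^'n^'n"
  assumes "finite B" "orthonormal B" "span B = UNIV"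
  shows "A *v x = (\<Sum>b\<in>B. inner b x *\<^sub>R (A *v b))"
proof -
  have "A *v x = A *v (\<Sum>b\<in>B. inner b x *\<^sub>R b)" using orthonormal_expand[OF assms] by metis
  also have "\<dots> = (\<Sum>b\<in>B. inner b x *\<^sub>R (A *v b))" by (simp add: mulv_sum matrix_vector_mult_scaleR)
  finally show ?thesis .
qed

lemma psd_mat_qf: "psd_mat A \<longleftrightarrow> transpose A = A \<and> (\<forall>v. 0 \<le> qf A v)"
  by (simp add: psd_mat_def qf_def)

lemma sqrt_exists:
  fixes A :: "real^'n^'n"
  assumes sym: "transpose A = A" and psd: "\<And>v. 0 \<le> qf A v"
  shows "\<exists>R. psd_mat R \<and> R ** R = A"
proof -
  obtain B where B: "finite B" "orthonormal B" "\<forall>b\<in>B. A *v b = qf A b *\<^sub>R b" "span B = UNIV"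
    using spectral[OF sym] by blast
  define R where "R = (\<Sum>b\<in>B. sqrt (qf A b) *\<^sub>R outer b)"
  have Rx: "R *v x = (\<Sum>b\<in>B. (sqrt (qf A b) * inner b x) *\<^sub>R b)" for x
    unfolding R_def sum_mulv by (simp add: scaleR_matrix_vector_assoc[symmetric] outer_mulv)
  have symR: "transpose R = R"
    unfolding R_def transpose_sum by (simp add: transpose_scalar transpose_outer)
  have "qf R v = (\<Sum>b\<in>B. sqrt (qf A b) * (inner b v)^2)" for v
    unfolding qf_def Rx by (simp add: inner_sum_right power2_eq_square inner_commute mult.commute mult.left_commute)
  hence "0 \<le> qf R v" for v using psd by (simp add: sum_nonneg)
  hence "psd_mat R" using symR psd_mat_qf by blast
  moreover have "R ** R = A"
  proof -
    have "(R ** R) *v x = A *v x" for x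
    proof -
      have "(R ** R) *v x = R *v (R *v x)" by (simp add: matrix_vector_mul_assoc)
      also have "\<dots> = (\<Sum>c\<in>B. (sqrt (qf A c) * inner c (R *v x)) *\<^sub>R c)" by (rule Rx)
      also have "\<dots> = (\<Sum>c\<in>B. (qf A c * inner c x) *\<^sub>R c)"
      proof (rule sum.cong)
        fix c assume c: "c \<in> B"
        have "inner c (R *v x) = sqrt (qf A c) * inner c x"
          unfolding Rx using orthonormal_inner_sum[OF B(1,2) c] .
        thus "(sqrt (qf A c) * inner c (R *v x)) *\<^sub>R c = (qf A c * inner c x) *\<^sub>R c"
          using psd[of c] by (simp add: mult.assoc[symmetric])
      qed simp
      also have "\<dots> = A *v x"
        using mulv_expand[OF B(1,2,4), of A x] B(3) by (simp add: mult.commute)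
      finally show ?thesis .
    qed
    thus ?thesis by (simp add: matrix_eq)
  qed
  ultimately show ?thesis by blast
qed

lemma sqrt_unique:
  fixes R S :: "real^'n^'n"
  assumes R: "psd_mat R" and S: "psd_mat S" and eq: "R ** R = S ** S"
  shows "R = S"
proof -
  define T where "T = R - S"
  have symR: "transpose R = R" and symS: "transpose S = S" using R S by (auto simp: psd_mat_def)
  have pR: "\<And>v. 0 \<le> qf R v" and pS: "\<And>v. 0 \<le> qf S v" using R S by (auto simp: psd_mat_qf)
  have symT: "transpose T = T" unfolding T_def using symR symS by (simp add: transpose_def vec_eq_iff)
  obtain B where B: "finite B" "orthonormal B" "\<forall>b\<in>B. T *v b = qf T b *\<^sub>R b" "span B = UNIV"
    using spectral[OF symT] by blast
  have Tb: "T *v b = 0" if b: "b \<in> B" for b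
  proof -
    define mu where "mu = qf T b"
    have Tb: "T *v b = mu *\<^sub>R b" using B(3) b mu_def by auto
    have "R ** R - S ** S = R ** T + T ** S" unfolding T_def
      by (simp add: matrix_add_ldistrib matrix_vector_mult_diff_rdistrib algebra_simps matrix_eq
          matrix_vector_mul_assoc[symmetric])
    hence "0 = inner b ((R ** T + T ** S) *v b)" using eq by simp
    also have "\<dots> = inner b (R *v (T *v b)) + inner b (T *v (S *v b))"
      by (simp add: matrix_vector_mult_add_rdistrib matrix_vector_mul_assoc[symmetric] inner_add_right)
    also have "inner b (T *v (S *v b)) = inner (T *v b) (S *v b)" using inner_mat_sym[OF symT] by simp
    also have "\<dots> = mu * qf S b" unfolding Tb qf_def by (simp add: inner_commute)
    also have "inner b (R *v (T *v b)) = mu * qf R b" unfolding Tb qf_def by (simp add: matrix_vector_mult_scaleR)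
    finally have "mu * (qf R b + qf S b) = 0" by (simp add: algebra_simps)
    hence "mu = 0 \<or> (qf R b = 0 \<and> qf S b = 0)" using pR[of b] pS[of b] by auto
    thus ?thesis
    proof
      assume "mu = 0" thus ?thesis using Tb by simp
    next
      assume "qf R b = 0 \<and> qf S b = 0"
      hence "R *v b = 0" "S *v b = 0" using psd_null[OF symR pR] psd_null[OF symS pS] by auto
      thus ?thesis unfolding T_def by (simp add: matrix_vector_mult_diff_rdistrib)
    qed
  qed
  have "T *v x = 0" for x using mulv_expand[OF B(1,2,4), of T x] Tb by simp
  hence "T = 0" by (simp add: matrix_eq)
  thus ?thesis unfolding T_def by simp
qed

lemma mat_sqrt_char:
  fixes A :: "real^'n^'n"
  assumes sym: "transpose A = A" and psd: "\<And>v. 0 \<le> qf A v"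
  shows "psd_mat (mat_sqrt A) \<and> mat_sqrt A ** mat_sqrt A = A"
proof -
  obtain R where R: "psd_mat R \<and> R ** R = A" using sqrt_exists[OF sym psd] by blast
  have "\<exists>!R. psd_mat R \<and> R ** R = A"
    using R sqrt_unique by metis
  thus ?thesis unfolding mat_sqrt_def by (rule theI')
qed

lemma norm_mat_sqrt:
  fixes A :: "real^'n^'n"
  assumes sym: "transpose A = A" and psd: "\<And>v. 0 \<le> qf A v"
  shows "(norm (mat_sqrt A *v v))^2 = qf A v"
proof -
  let ?R = "mat_sqrt A"
  have c: "psd_mat ?R" "?R ** ?R = A" using mat_sqrt_char[OF sym psd] by auto
  have "(norm (?R *v v))^2 = inner (?R *v v) (?R *v v)" by (simp add: power2_norm_eq_inner)
  also have "\<dots> = inner v (?R *v (?R *v v))" using inner_mat_sym[of ?R v "?R *v v"] c(1)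
    by (simp add: psd_mat_def)
  also have "\<dots> = qf A v" unfolding qf_def by (simp add: matrix_vector_mul_assoc c(2))
  finally show ?thesis .
qed



type_synonym 'n sqm = "real^'n^'n"

lemma mm_add_right: "(A::real^'n^'m) ** (B + C) = A ** B + A ** C"
  by (rule matrix_add_ldistrib)
lemma mm_add_left: "((A::real^'n^'m) + B) ** C = A ** C + B ** C"
  by (simp add: matrix_matrix_mult_def vec_eq_iff sum.distrib algebra_simps)
lemma mm_diff_right: "(A::real^'n^'m) ** (B - C) = A ** B - A ** C"
  by (simp add: matrix_matrix_mult_def vec_eq_iff sum_subtractf algebra_simps)
lemma mm_diff_left: "((A::real^'n^'m) - B) ** C = A ** C - B ** C"
  by (simp add: matrix_matrix_mult_def vec_eq_iff sum_subtractf algebra_simps)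
lemma mm_scale_left: "(c *\<^sub>R (A::real^'n^'m)) ** B = c *\<^sub>R (A ** B)"
  by (simp add: scalar_matrix_assoc)
lemma mm_scale_right: "(A::real^'n^'m) ** (c *\<^sub>R B) = c *\<^sub>R (A ** B)"
  by (simp add: matrix_scalar_ac scalar_matrix_assoc)
lemma mm_sum_left: "(\<Sum>i\<in>I. f i) ** (B::real^'n^'m) = (\<Sum>i\<in>I. f i ** B)"
  by (induction I rule: infinite_finite_induct) (simp_all add: mm_add_left)
lemma mm_sum_right: "(A::real^'n^'m) ** (\<Sum>i\<in>I. f i) = (\<Sum>i\<in>I. A ** f i)"
  by (induction I rule: infinite_finite_induct) (simp_all add: mm_add_right)

lemma trace_add': "trace ((A::real^'n^'n) + B) = trace A + trace B"
  by (rule trace_add)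
lemma trace_diff': "trace ((A::real^'n^'n) - B) = trace A - trace B"
  by (rule trace_sub)
lemma trace_scale: "trace (c *\<^sub>R (A::real^'n^'n)) = c * trace A"
  by (simp add: trace_def sum_distrib_left)
lemma trace_sum: "trace (\<Sum>i\<in>I. (f i::real^'n^'n)) = (\<Sum>i\<in>I. trace (f i))"
  by (induction I rule: infinite_finite_induct) (simp_all add: trace_add trace_0[unfolded mat_0])
lemma trace_transpose: "trace (transpose (A::real^'n^'n)) = trace A"
  by (simp add: trace_def transpose_def)

lemma trace_inner: "trace ((A::real^'n^'n) ** B) = inner A (transpose B)"
  by (simp add: trace_def matrix_matrix_mult_def inner_vec_def transpose_def)

lemma transpose_mm: "transpose ((A::real^'n^'n) ** B) = transpose B ** transpose A"
  by (rule matrix_transpose_mul)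

lemma transpose_add: "transpose ((A::real^'n^'m) + B) = transpose A + transpose B"
  by (simp add: transpose_def vec_eq_iff)
lemma transpose_diff: "transpose ((A::real^'n^'m) - B) = transpose A - transpose B"
  by (simp add: transpose_def vec_eq_iff)

lemma norm_sq_rows: "(norm (A::real^'n^'m))^2 = (\<Sum>i\<in>UNIV. (norm (A$i))^2)"
  by (simp add: power2_norm_eq_inner inner_vec_def)

lemma norm_mulv: "norm ((A::real^'n^'m) *v b) \<le> norm A * norm b"
proof -
  have "(norm (A *v b))^2 = inner (A *v b) (A *v b)" by (simp add: power2_norm_eq_inner)
  also have "\<dots> = (\<Sum>i\<in>UNIV. (inner (A$i) b)^2)"
    unfolding inner_vec_def[of "A *v b"] matrix_vector_mul_component by (simp add: power2_eq_square)
  also have "\<dots> \<le> (\<Sum>i\<in>UNIV. (norm (A$i))^2 * (norm b)^2)"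
  proof (rule sum_mono)
    fix i
    have "\<bar>inner (A$i) b\<bar> \<le> norm (A$i) * norm b" by (rule Cauchy_Schwarz_ineq2)
    hence "\<bar>inner (A$i) b\<bar>^2 \<le> (norm (A$i) * norm b)^2" by (rule power_mono) simp
    thus "(inner (A$i) b)^2 \<le> (norm (A$i))^2 * (norm b)^2" by (simp add: power_mult_distrib)
  qed
  also have "\<dots> = (norm A * norm b)^2" by (simp add: norm_sq_rows sum_distrib_right power_mult_distrib)
  finally show ?thesis by (rule power2_le_imp_le) simp
qed

lemma norm_transpose: "norm (transpose (A::real^'n^'m)) = norm A"
proof -
  have "inner (transpose A) (transpose A) = inner A A"
    by (simp add: inner_vec_def transpose_def) (rule sum.swap)
  thus ?thesis by (simp add: norm_eq_sqrt_inner)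
qed

lemma norm_mm: "norm ((A::real^'n^'m) ** (B::real^'p^'n)) \<le> norm A * norm B"
proof -
  have row: "(A ** B)$i = transpose B *v (A$i)" for i
    by (simp add: matrix_matrix_mult_def matrix_vector_mult_def transpose_def vec_eq_iff mult.commute)
  have "(norm (A ** B))^2 = (\<Sum>i\<in>UNIV. (norm ((A ** B)$i))^2)" by (rule norm_sq_rows)
  also have "\<dots> \<le> (\<Sum>i\<in>UNIV. (norm (A$i))^2 * (norm B)^2)"
  proof (rule sum_mono)
    fix i
    have "norm ((A ** B)$i) \<le> norm B * norm (A$i)" using norm_mulv[of "transpose B" "A$i"] row norm_transpose
      by metis
    hence "(norm ((A ** B)$i))^2 \<le> (norm B * norm (A$i))^2" by (rule power_mono) simp
    thus "(norm ((A ** B)$i))^2 \<le> (norm (A$i))^2 * (norm B)^2" by (simp add: power_mult_distrib mult.commute)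
  qed
  also have "\<dots> = (norm A * norm B)^2" by (simp add: norm_sq_rows sum_distrib_right power_mult_distrib)
  finally show ?thesis by (rule power2_le_imp_le) simp
qed

lemma inv_props:
  fixes A :: "real^'n^'n"
  assumes "invertible A"
  shows "A ** matrix_inv A = mat 1" "matrix_inv A ** A = mat 1"
proof -
  have "\<exists>A'. A ** A' = mat 1 \<and> A' ** A = mat 1" using assms invertible_def by blast
  hence "A ** matrix_inv A = mat 1 \<and> matrix_inv A ** A = mat 1"
    unfolding matrix_inv_def by (rule someI_ex)
  thus "A ** matrix_inv A = mat 1" "matrix_inv A ** A = mat 1" by auto
qed

lemma inv_unique:
  fixes A B :: "real^'n^'n"
  assumes "A ** B = mat 1"
  shows "matrix_inv A = B" "invertible A"
proof -
  have BA: "B ** A = mat 1" using assms matrix_left_right_inverse by blast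
  show inv: "invertible A" unfolding invertible_def using assms BA by blast
  have "matrix_inv A = matrix_inv A ** (A ** B)" using assms by simp
  also have "\<dots> = B" by (simp add: matrix_mul_assoc inv_props[OF inv])
  finally show "matrix_inv A = B" .
qed

lemma inv_sym:
  fixes A :: "real^'n^'n"
  assumes "invertible A" "transpose A = A"
  shows "transpose (matrix_inv A) = matrix_inv A"
proof -
  have "transpose (matrix_inv A) ** A = mat 1"
    using arg_cong[OF inv_props(1)[OF assms(1)], of transpose] assms(2) by (simp add: matrix_transpose_mul)
  hence "A ** transpose (matrix_inv A) = mat 1" using matrix_left_right_inverse by blast
  thus ?thesis using inv_unique by metis
qed

lemma pd_invertible:
  fixes A :: "real^'n^'n"
  assumes "\<And>a. a \<noteq> 0 \<Longrightarrow> 0 < qf A a"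
  shows "invertible A"
proof -
  have "\<forall>x. A *v x = 0 \<longrightarrow> x = 0" using assms unfolding qf_def by force
  hence "\<exists>B. B ** A = mat 1" using matrix_left_invertible_ker by blast
  thus ?thesis using invertible_left_inverse by blast
qed



lemma LamX_add: "LamX Lam (v + w) = LamX Lam v + LamX Lam w"
  by (simp add: LamX_def scaleR_add_left sum.distrib)
lemma LamX_diff: "LamX Lam (v - w) = LamX Lam v - LamX Lam w"
  by (simp add: LamX_def scaleR_diff_left sum_subtractf)
lemma LamX_scale: "LamX Lam (c *\<^sub>R v) = c *\<^sub>R LamX Lam v"
  by (simp add: LamX_def scaleR_sum_right)
lemma LamX_neg: "LamX Lam (- v) = - LamX Lam v"
  by (simp add: LamX_def sum_negf)
lemma LamX_axis: "LamX Lam (axis w 1) = Lam w"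
proof -
  have "LamX Lam (axis w 1) = (\<Sum>u\<in>UNIV. if u = w then Lam u else 0)"
    unfolding LamX_def by (rule sum.cong) (auto simp: axis_def)
  thus ?thesis by simp
qed
lemma LamX_sym: "(\<And>u. transpose (Lam u) = Lam u) \<Longrightarrow> transpose (LamX Lam v) = LamX Lam v"
  by (simp add: LamX_def transpose_sum transpose_scalar)

lemma Lam_adj_add: "Lam_adj Lam (M + N) = Lam_adj Lam M + Lam_adj Lam N"
  by (simp add: Lam_adj_def vec_eq_iff mm_add_right trace_add)
lemma Lam_adj_diff: "Lam_adj Lam (M - N) = Lam_adj Lam M - Lam_adj Lam N"
  by (simp add: Lam_adj_def vec_eq_iff mm_diff_right trace_sub)
lemma Lam_adj_scale: "Lam_adj Lam (c *\<^sub>R M) = c *\<^sub>R Lam_adj Lam M"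
  by (simp add: Lam_adj_def vec_eq_iff mm_scale_right trace_scale)
lemma Lam_adj_sum: "Lam_adj Lam (\<Sum>i\<in>I. f i) = (\<Sum>i\<in>I. Lam_adj Lam (f i))"
  by (induction I rule: infinite_finite_induct)
     (simp_all add: Lam_adj_add, simp_all add: Lam_adj_def vec_eq_iff trace_def matrix_matrix_mult_def)

lemma inner_Lam_adj: "inner w (Lam_adj Lam M) = trace (transpose (LamX Lam w) ** M)"
proof -
  have "inner w (Lam_adj Lam M) = (\<Sum>u\<in>UNIV. w$u * trace (transpose (Lam u) ** M))"
    by (simp add: inner_vec_def Lam_adj_def)
  also have "\<dots> = (\<Sum>u\<in>UNIV. trace ((w$u *\<^sub>R transpose (Lam u)) ** M))"
    by (simp add: mm_scale_left trace_scale)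
  also have "\<dots> = trace ((\<Sum>u\<in>UNIV. w$u *\<^sub>R transpose (Lam u)) ** M)"
    by (simp add: mm_sum_left trace_sum)
  also have "(\<Sum>u\<in>UNIV. w$u *\<^sub>R transpose (Lam u)) = transpose (LamX Lam w)"
    by (simp add: LamX_def transpose_sum transpose_scalar)
  finally show ?thesis .
qed

lemma hess_mulv:
  "hess Lam x *v v = Lam_adj Lam (matrix_inv (LamX Lam x) ** LamX Lam v ** matrix_inv (LamX Lam x))"
proof -
  let ?Xi = "matrix_inv (LamX Lam x)"
  have "hess Lam x *v v = (\<Sum>w\<in>UNIV. v$w *\<^sub>R Lam_adj Lam (?Xi ** Lam w ** ?Xi))"
    by (simp add: matrix_mult_sum column_def hess_def LamX_axis scalar_mult_eq_scaleR)
  also have "\<dots> = Lam_adj Lam (\<Sum>w\<in>UNIV. v$w *\<^sub>R (?Xi ** Lam w ** ?Xi))"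
    by (simp add: Lam_adj_sum Lam_adj_scale)
  also have "(\<Sum>w\<in>UNIV. v$w *\<^sub>R (?Xi ** Lam w ** ?Xi)) = ?Xi ** LamX Lam v ** ?Xi"
    by (simp add: LamX_def mm_sum_left mm_sum_right mm_scale_left mm_scale_right)
  finally show ?thesis .
qed



lemma mulv_axis_comp: "((A::real^'n^'m) *v axis w 1) $ u = A$u$w"
proof -
  have "((A::real^'n^'m) *v axis w 1) $ u = (\<Sum>k\<in>UNIV. if k = w then A$u$k else 0)"
    by (simp add: matrix_vector_mult_def axis_def if_distrib cong: if_cong)
  thus ?thesis by simp
qed

lemma qf_neg: "qf A (- v) = qf A v"
  using qf_scale[of A "-1" v] by simp

lemma matrix_main:
  fixes Lam :: "'u::finite \<Rightarrow> real^'r::finite^'r" and x y :: "real^'u"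
  assumes symL: "\<And>u. transpose (Lam u) = Lam u"
    and inj: "\<And>w. LamX Lam w = 0 \<Longrightarrow> w = 0"
    and Xpd: "\<And>a. a \<noteq> 0 \<Longrightarrow> 0 < qf (LamX Lam x) a"
    and Ypd: "\<And>a. a \<noteq> 0 \<Longrightarrow> 0 < qf (LamX Lam y) a"
    and close: "local_norm Lam x (x - y) < 1/2"
  shows "0 \<le> qf (LamX Lam (matrix_inv (hess Lam x) *v (- grad Lam y))) a"
proof -
  define X where "X = LamX Lam x"
  define Y where "Y = LamX Lam y"
  have symX: "transpose X = X" and symY: "transpose Y = Y" unfolding X_def Y_def using LamX_sym symL by auto
  have symLX: "transpose (LamX Lam v) = LamX Lam v" for v using LamX_sym symL by auto
  have Xpsd: "0 \<le> qf X a" for a using Xpd[of a] unfolding X_def by (cases "a = 0") (auto simp: qf_def)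
  define S where "S = mat_sqrt X"
  have Sc: "psd_mat S" "S ** S = X" using mat_sqrt_char[OF symX Xpsd] unfolding S_def by auto
  have symS: "transpose S = S" using Sc(1) psd_mat_def by blast
  have invX: "invertible X" using pd_invertible Xpd unfolding X_def by blast
  have "\<forall>v. S *v v = 0 \<longrightarrow> v = 0"
  proof (intro allI impI)
    fix v assume "S *v v = 0"
    hence "X *v v = 0" by (simp add: Sc(2)[symmetric] matrix_vector_mul_assoc[symmetric])
    thus "v = 0" using inj_matrix_vector_mult[OF invX] by (metis injD matrix_vector_mult_0_right)
  qed
  hence invS: "invertible S" using matrix_left_invertible_ker invertible_left_inverse by blast
  define Si where "Si = matrix_inv S"
  have SSi: "S ** Si = mat 1" "Si ** S = mat 1" unfolding Si_def using inv_props[OF invS] by auto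
  have symSi: "transpose Si = Si" unfolding Si_def by (rule inv_sym[OF invS symS])
  have Xi: "matrix_inv X = Si ** Si"
  proof (rule inv_unique(1))
    have "X ** (Si ** Si) = S ** (S ** Si) ** Si" by (simp add: Sc(2)[symmetric] matrix_mul_assoc)
    also have "\<dots> = mat 1" by (simp add: SSi)
    finally show "X ** (Si ** Si) = mat 1" .
  qed
  define wh where "wh M = Si ** M ** Si" for M :: "real^'r^'r"
  have wh_sym: "transpose M = M \<Longrightarrow> transpose (wh M) = wh M" for M
    unfolding wh_def by (simp add: matrix_transpose_mul symSi matrix_mul_assoc)
  have unwh: "S ** wh M ** S = M" for M
  proof -
    have "S ** wh M ** S = (S ** Si) ** M ** (Si ** S)" unfolding wh_def by (simp add: matrix_mul_assoc)
    thus ?thesis by (simp add: SSi)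
  qed
  have trace_wh: "trace (V ** (Si ** Si ** M ** (Si ** Si))) = trace (wh V ** wh M)" for V M
  proof -
    have "trace (wh V ** wh M) = trace (Si ** (V ** Si ** Si ** M ** Si))"
      unfolding wh_def by (simp add: matrix_mul_assoc)
    also have "\<dots> = trace ((V ** Si ** Si ** M ** Si) ** Si)" by (rule trace_mul_sym)
    finally show ?thesis by (simp add: matrix_mul_assoc)
  qed
  have trace_wh1: "trace (V ** (Si ** M ** Si)) = trace (wh V ** M)" for V M
  proof -
    have "trace (wh V ** M) = trace (Si ** (V ** Si ** M))"
      unfolding wh_def by (simp add: matrix_mul_assoc)
    also have "\<dots> = trace ((V ** Si ** M) ** Si)" by (rule trace_mul_sym)
    finally show ?thesis by (simp add: matrix_mul_assoc)
  qed
  define H where "H = hess Lam x"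
  have Hform: "inner v (H *v w) = inner (wh (LamX Lam v)) (wh (LamX Lam w))" for v w
  proof -
    have "inner v (H *v w) = trace (transpose (LamX Lam v) ** (Si ** Si ** LamX Lam w ** (Si ** Si)))"
      unfolding H_def hess_mulv inner_Lam_adj X_def[symmetric] Xi by simp
    also have "\<dots> = trace (wh (LamX Lam v) ** wh (LamX Lam w))" unfolding symLX by (rule trace_wh)
    also have "\<dots> = inner (wh (LamX Lam v)) (wh (LamX Lam w))"
      unfolding trace_inner using wh_sym[OF symLX] by simp
    finally show ?thesis .
  qed
  have qfH: "qf H v = (norm (wh (LamX Lam v)))^2" for v
    unfolding qf_def Hform by (simp add: power2_norm_eq_inner)
  have symH: "transpose H = H"
  proof -
    have "H$u$w = H$w$u" for u w
    proof -
      have "H$u$w = inner (axis u 1) (H *v axis w 1)" by (simp add: inner_axis' mulv_axis_comp)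
      also have "\<dots> = inner (axis w 1) (H *v axis u 1)" unfolding Hform by (simp add: inner_commute)
      also have "\<dots> = H$w$u" by (simp add: inner_axis' mulv_axis_comp)
      finally show ?thesis .
    qed
    thus ?thesis by (simp add: transpose_def vec_eq_iff)
  qed
  have Hpsd: "0 \<le> qf H v" for v unfolding qfH by simp
  have "\<forall>v. H *v v = 0 \<longrightarrow> v = 0"
  proof (intro allI impI)
    fix v assume "H *v v = 0"
    hence "qf H v = 0" by (simp add: qf_def)
    hence "wh (LamX Lam v) = 0" unfolding qfH by simp
    hence "LamX Lam v = 0" using unwh[of "LamX Lam v"] by simp
    thus "v = 0" by (rule inj)
  qed
  hence invH: "invertible H" using matrix_left_invertible_ker invertible_left_inverse by blast
  define z where "z = matrix_inv H *v (- grad Lam y)"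
  have Hz: "H *v z = Lam_adj Lam (matrix_inv Y)"
    unfolding z_def matrix_vector_mul_assoc inv_props[OF invH] by (simp add: grad_def Y_def)
  have Hx: "H *v x = Lam_adj Lam (matrix_inv X)"
  proof -
    have "H *v x = Lam_adj Lam (matrix_inv X ** X ** matrix_inv X)"
      unfolding H_def hess_mulv X_def ..
    also have "matrix_inv X ** X ** matrix_inv X = matrix_inv X" by (simp add: inv_props[OF invX])
    finally show ?thesis .
  qed
  define r where "r = norm (wh (LamX Lam (y - x)))"
  have "(local_norm Lam x (x - y))^2 = qf H (x - y)"
    unfolding local_norm_def H_def[symmetric] by (rule norm_mat_sqrt[OF symH Hpsd])
  also have "qf H (x - y) = r^2" unfolding r_def qfH
    by (metis minus_diff_eq qf_neg qfH)
  finally have "(local_norm Lam x (x - y))^2 = r^2" .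
  hence rl: "r = local_norm Lam x (x - y)" unfolding r_def local_norm_def
    by (metis norm_ge_zero power2_eq_iff_nonneg)
  have r0: "0 \<le> r" and r12: "r < 1/2" using close rl r_def by (auto simp: local_norm_def)
  define D' where "D' = wh (LamX Lam (y - x))"
  have nD: "norm D' = r" unfolding D'_def r_def ..
  define J where "J = mat 1 + D'"
  have YJ: "Y = S ** J ** S"
  proof -
    have "S ** J ** S = S ** S + S ** D' ** S" unfolding J_def by (simp add: mm_add_left mm_add_right)
    also have "\<dots> = X + LamX Lam (y - x)" unfolding D'_def unwh Sc(2) ..
    also have "\<dots> = Y" unfolding X_def Y_def LamX_diff by simp
    finally show ?thesis ..
  qed
  have invY: "invertible Y" using pd_invertible Ypd unfolding Y_def by blast
  have JY: "J = Si ** Y ** Si" unfolding YJ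
    by (simp add: matrix_mul_assoc SSi) (simp add: matrix_mul_assoc[symmetric] SSi)
  have invJ: "invertible J" unfolding JY
    using invertible_mult[OF invertible_mult[OF _ invY]] inv_unique(2)[OF SSi(2)] by blast
  define Ji where "Ji = matrix_inv J"
  have JJi: "J ** Ji = mat 1" unfolding Ji_def using inv_props[OF invJ] by simp
  have Yi: "matrix_inv Y = Si ** Ji ** Si"
  proof (rule inv_unique(1))
    have "Y ** (Si ** Ji ** Si) = S ** (J ** (S ** Si) ** Ji) ** Si" unfolding YJ by (simp add: matrix_mul_assoc)
    also have "\<dots> = mat 1" by (simp add: SSi JJi)
    finally show "Y ** (Si ** Ji ** Si) = mat 1" .
  qed
  define E where "E = Ji - mat 1"
  have "Ji + D' ** Ji = mat 1" using JJi unfolding J_def by (simp add: mm_add_left)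
  hence "E = - (D' ** Ji)" unfolding E_def by (simp add: algebra_simps)
  also have "Ji = mat 1 + E" unfolding E_def by simp
  finally have Eeq: "E = - D' - D' ** E" by (simp add: mm_add_right)
  have "norm E \<le> norm D' + norm (D' ** E)" using Eeq norm_triangle_ineq4[of "- D'" "D' ** E"] by simp
  also have "\<dots> \<le> r + r * norm E" using norm_mm[of D' E] nD by simp
  finally have "norm E * (1 - r) \<le> r" by (simp add: algebra_simps)
  hence nE: "norm E < 1"
  proof -
    assume a: "norm E * (1 - r) \<le> r"
    show ?thesis
    proof (rule ccontr)
      assume "\<not> norm E < 1"
      hence "1 * (1 - r) \<le> norm E * (1 - r)" using r12 by (intro mult_right_mono) auto
      hence "1 - r \<le> r" using a by (metis mult_1 order_trans)
      thus False using r12 by linarith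
    qed
  qed
  define w where "w = z - x"
  define W' where "W' = wh (LamX Lam w)"
  have "(norm W')^2 = inner w (H *v w)" unfolding W'_def Hform by (simp add: power2_norm_eq_inner)
  also have "H *v w = Lam_adj Lam (matrix_inv Y - matrix_inv X)"
    unfolding w_def matrix_vector_mult_diff_distrib Hz Hx Lam_adj_diff ..
  also have "matrix_inv Y - matrix_inv X = Si ** E ** Si"
    unfolding Yi Xi E_def by (simp add: mm_diff_left mm_diff_right matrix_mul_assoc)
  also have "inner w (Lam_adj Lam (Si ** E ** Si)) = trace (W' ** E)"
    unfolding inner_Lam_adj symLX W'_def by (rule trace_wh1)
  also have "\<dots> = inner W' (transpose E)" by (rule trace_inner)
  also have "\<dots> \<le> norm W' * norm E" using norm_cauchy_schwarz[of W' "transpose E"] norm_transpose by metis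
  finally have "(norm W')^2 \<le> norm W' * norm E" .
  hence nW: "norm W' < 1" using nE
    by (smt (verit, ccfv_SIG) mult_le_cancel_left norm_ge_zero power2_eq_square)
  have ZW: "LamX Lam z = S ** (mat 1 + W') ** S"
  proof -
    have "S ** (mat 1 + W') ** S = X + LamX Lam w" unfolding W'_def
      by (simp add: mm_add_left mm_add_right unwh Sc(2))
    also have "\<dots> = LamX Lam z" unfolding X_def w_def LamX_diff by simp
    finally show ?thesis ..
  qed
  define b where "b = S *v a"
  have "qf (LamX Lam z) a = inner (S *v a) ((mat 1 + W') *v (S *v a))"
    unfolding ZW qf_def matrix_vector_mul_assoc[symmetric] using inner_mat_sym[OF symS] by metis
  also have "\<dots> = inner b b + inner b (W' *v b)" unfolding b_def
    by (simp add: matrix_vector_mult_add_rdistrib inner_add_right)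
  also have "\<dots> \<ge> 0"
  proof -
    have "\<bar>inner b (W' *v b)\<bar> \<le> norm b * norm (W' *v b)" by (rule Cauchy_Schwarz_ineq2)
    also have "\<dots> \<le> norm b * (norm W' * norm b)" by (simp add: mult_left_mono norm_mulv)
    also have "\<dots> \<le> norm b * norm b" using nW
      by (intro mult_left_mono mult_left_le_one_le) auto
    finally have c: "\<bar>inner b (W' *v b)\<bar> \<le> norm b * norm b" .
    have "inner b b = norm b * norm b" by (simp add: power2_norm_eq_inner[symmetric] power2_eq_square)
    thus ?thesis using c by (simp add: abs_le_iff)
  qed
  finally show ?thesis unfolding z_def H_def .
qed



lemma max_by:
  fixes \<mu> :: "'k \<Rightarrow> 'l::linorder"
  assumes "finite F" "F \<noteq> {}"
  shows "\<exists>a\<in>F. \<forall>l\<in>F. \<mu> l \<le> \<mu> a"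
proof -
  have "Max (\<mu> ` F) \<in> \<mu> ` F" using assms by simp
  then obtain a where "a \<in> F" "\<mu> a = Max (\<mu> ` F)" by auto
  thus ?thesis using assms by (metis Max_ge finite_imageI imageI)
qed

lemma nzd_gen:
  fixes f g :: "'k::comm_monoid_add \<Rightarrow>\<^sub>0 real"
    and \<mu> :: "'k \<Rightarrow> 'l::{ordered_cancel_comm_monoid_add, linorder}"
  assumes inj: "inj \<mu>" and add: "\<And>a b. \<mu> (a + b) = \<mu> a + \<mu> b"
    and f: "f \<noteq> 0" and g: "g \<noteq> 0"
  shows "f * g \<noteq> 0"
proof -
  define FF where "FF = Poly_Mapping.keys f"
  define GG where "GG = Poly_Mapping.keys g"
  have FG: "finite FF" "FF \<noteq> {}" "finite GG" "GG \<noteq> {}" using f g unfolding FF_def GG_def by auto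
  obtain a0 where a0: "a0 \<in> FF" "\<And>l. l \<in> FF \<Longrightarrow> \<mu> l \<le> \<mu> a0" using max_by[OF FG(1,2)] by blast
  obtain b0 where b0: "b0 \<in> GG" "\<And>l. l \<in> GG \<Longrightarrow> \<mu> l \<le> \<mu> b0" using max_by[OF FG(3,4)] by blast
  have key: "l = a0 \<and> q = b0" if "l \<in> FF" "q \<in> GG" "l + q = a0 + b0" for l q
  proof -
    have e: "\<mu> l + \<mu> q = \<mu> a0 + \<mu> b0" using that(3) add by metis
    have l1: "\<mu> l \<le> \<mu> a0" "\<mu> q \<le> \<mu> b0" using a0 b0 that by auto
    have "\<mu> l = \<mu> a0"
    proof (rule ccontr)
      assume "\<mu> l \<noteq> \<mu> a0"
      hence "\<mu> l < \<mu> a0" using l1 by simp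
      hence "\<mu> l + \<mu> q < \<mu> a0 + \<mu> b0" using l1(2) by (rule add_less_le_mono)
      thus False using e by simp
    qed
    moreover have "\<mu> q = \<mu> b0"
    proof (rule ccontr)
      assume "\<mu> q \<noteq> \<mu> b0"
      hence "\<mu> q < \<mu> b0" using l1 by simp
      hence "\<mu> l + \<mu> q < \<mu> a0 + \<mu> b0" using l1(1) by (metis add_le_less_mono)
      thus False using e by simp
    qed
    ultimately show ?thesis using inj by (simp add: inj_eq)
  qed
  define k where "k = a0 + b0"
  have inner: "(\<Sum>q. Poly_Mapping.lookup g q when k = l + q) = (if l = a0 then Poly_Mapping.lookup g b0 else 0)" if l: "l \<in> FF" for l
  proof -
    have "(\<lambda>q. Poly_Mapping.lookup g q when k = l + q) = (\<lambda>q. if q = b0 then (if l = a0 then Poly_Mapping.lookup g b0 else 0) else 0)"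
    proof
      fix q
      show "(Poly_Mapping.lookup g q when k = l + q) = (if q = b0 then (if l = a0 then Poly_Mapping.lookup g b0 else 0) else 0)"
      proof (cases "q \<in> GG \<and> k = l + q")
        case True
        hence "l = a0 \<and> q = b0" using key l k_def by auto
        thus ?thesis using True by simp
      next
        case False
        have z: "(Poly_Mapping.lookup g q when k = l + q) = 0"
          using False unfolding GG_def by (auto simp: when_def in_keys_iff)
        have "\<not> (q = b0 \<and> l = a0)" using False b0(1) k_def by blast
        thus ?thesis using z by simp
      qed
    qed
    hence "(\<Sum>q. Poly_Mapping.lookup g q when k = l + q) = (\<Sum>q. if q = b0 then (if l = a0 then Poly_Mapping.lookup g b0 else 0) else 0)"
      by (rule arg_cong)
    also have "\<dots> = (if l = a0 then Poly_Mapping.lookup g b0 else 0)" by (rule Sum_any.delta)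
    finally show ?thesis .
  qed
  have "Poly_Mapping.lookup (f * g) k = (\<Sum>l. Poly_Mapping.lookup f l * (\<Sum>q. Poly_Mapping.lookup g q when k = l + q))"
    by (rule lookup_mult)
  also have "(\<lambda>l. Poly_Mapping.lookup f l * (\<Sum>q. Poly_Mapping.lookup g q when k = l + q)) =
      (\<lambda>l. if l = a0 then Poly_Mapping.lookup f a0 * Poly_Mapping.lookup g b0 else 0)"
  proof
    fix l
    show "Poly_Mapping.lookup f l * (\<Sum>q. Poly_Mapping.lookup g q when k = l + q) = (if l = a0 then Poly_Mapping.lookup f a0 * Poly_Mapping.lookup g b0 else 0)"
    proof (cases "l \<in> FF")
      case True thus ?thesis using inner by auto
    next
      case False
      hence "Poly_Mapping.lookup f l = 0" unfolding FF_def by (simp add: in_keys_iff)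
      thus ?thesis using False a0(1) by auto
    qed
  qed
  also have "(\<Sum>l. if l = a0 then Poly_Mapping.lookup f a0 * Poly_Mapping.lookup g b0 else 0) = Poly_Mapping.lookup f a0 * Poly_Mapping.lookup g b0"
    by simp
  also have "\<dots> \<noteq> 0" using a0(1) b0(1) unfolding FF_def GG_def by (simp add: in_keys_iff)
  finally show ?thesis by auto
qed

lemma mpoly_nzd:
  fixes f g :: "'v::finite mpoly"
  assumes "f \<noteq> 0" "g \<noteq> 0"
  shows "f * g \<noteq> 0"
proof -
  obtain enc :: "'v \<Rightarrow> nat" and n where "enc ` UNIV = {i. i < n}" "inj_on enc UNIV"
    using finite_imp_inj_to_nat_seg[of "UNIV :: 'v set"] by auto
  hence inje: "inj enc" by simp
  define \<mu> :: "('v \<Rightarrow>\<^sub>0 nat) \<Rightarrow> (nat \<Rightarrow>\<^sub>0 nat)" where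
    "\<mu> m = (\<Sum>v\<in>UNIV. Poly_Mapping.single (enc v) (Poly_Mapping.lookup m v))" for m
  have add: "\<mu> (a + b) = \<mu> a + \<mu> b" for a b
    unfolding \<mu>_def by (simp add: lookup_add single_add sum.distrib)
  have lk: "Poly_Mapping.lookup (\<mu> m) (enc v) = Poly_Mapping.lookup m v" for m v
  proof -
    have "Poly_Mapping.lookup (\<mu> m) (enc v) = (\<Sum>w\<in>UNIV. if w = v then Poly_Mapping.lookup m v else 0)"
      unfolding \<mu>_def lookup_sum
      by (rule sum.cong) (auto simp: lookup_single when_def inj_eq[OF inje])
    thus ?thesis by simp
  qed
  have "inj \<mu>"
  proof (rule injI)
    fix a b assume "\<mu> a = \<mu> b"
    hence "Poly_Mapping.lookup a v = Poly_Mapping.lookup b v" for v using lk by metis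
    thus "a = b" by (rule poly_mapping_eqI)
  qed
  from nzd_gen[OF this add assms] show ?thesis .
qed



abbreviation sc :: "real \<Rightarrow> 'v mpoly" where "sc c \<equiv> Poly_Mapping.single 0 c"

lemma psmult_sc: "psmult c p = sc c * p"
  unfolding psmult_def using mult_map_scale_conv_mult[of c p] by (simp add: mult.commute)

lemma sc_sum: "sc (\<Sum>i\<in>I. f i) = (\<Sum>i\<in>I. sc (f i))"
  by (induction I rule: infinite_finite_induct) (simp_all add: single_add)

lemma sc_mult: "sc (a * b) = sc a * (sc b :: 'v mpoly)"
  by (simp add: mult_single)

lemma lincomb_sc: "lincomb q a = (\<Sum>u\<in>UNIV. sc (a$u) * q u)"
  by (simp add: lincomb_def psmult_sc)

lemma lincomb_add: "lincomb q (a + b) = lincomb q a + lincomb q b"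
  by (simp add: lincomb_sc single_add distrib_right sum.distrib)
lemma lincomb_diff: "lincomb q (a - b) = lincomb q a - lincomb q b"
  by (simp add: lincomb_sc single_diff left_diff_distrib sum_subtractf)
lemma lincomb_zero: "lincomb q 0 = 0"
  by (simp add: lincomb_sc)

lemma lincomb_inj:
  assumes "fam_basis_on UNIV q B" "lincomb q a = lincomb q b"
  shows "a = b"
proof -
  have ind: "\<forall>c. (\<Sum>i\<in>UNIV. psmult (c i) (q i)) = 0 \<longrightarrow> (\<forall>i\<in>UNIV. c i = 0)"
    using assms(1) unfolding fam_basis_on_def by blast
  have "lincomb q (a - b) = 0" using assms(2) by (simp add: lincomb_diff)
  hence "(\<Sum>i\<in>UNIV. psmult ((a - b)$i) (q i)) = 0" unfolding lincomb_def .
  hence "\<forall>i. (a - b)$i = 0" using ind by blast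
  thus ?thesis by (simp add: vec_eq_iff)
qed

lemma dual_pos:
  fixes x v :: "real^'u"
  assumes x: "x \<in> interior (dual_cone K)" and v: "v \<in> K" "v \<noteq> 0"
  shows "0 < inner v x"
proof -
  obtain e where e: "e > 0" "ball x e \<subseteq> dual_cone K" using x mem_interior by blast
  define t where "t = e / (2 * norm v)"
  have t: "t > 0" using e v by (simp add: t_def)
  have "dist x (x - t *\<^sub>R v) = t * norm v" using t by (simp add: dist_norm)
  also have "\<dots> = e / 2" using v by (simp add: t_def)
  finally have "x - t *\<^sub>R v \<in> ball x e" using e by simp
  hence "0 \<le> inner v (x - t *\<^sub>R v)" using e v unfolding dual_cone_def by blast
  hence "t * inner v v \<le> inner v x" by (simp add: inner_diff_right)
  moreover have "0 < t * inner v v" using t v by simp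
  ultimately show ?thesis by linarith
qed

lemma interior_orth_zero:
  fixes w :: "real^'u"
  assumes "interior K \<noteq> {}" "\<And>s. s \<in> K \<Longrightarrow> inner s w = 0"
  shows "w = 0"
proof (rule ccontr)
  assume w: "w \<noteq> 0"
  obtain s0 where "s0 \<in> interior K" using assms(1) by blast
  then obtain e where e: "e > 0" "ball s0 e \<subseteq> K" using mem_interior by blast
  define t where "t = e / (2 * norm w)"
  have t: "t > 0" using e w by (simp add: t_def)
  have "dist s0 (s0 + t *\<^sub>R w) = t * norm w" using t by (simp add: dist_norm)
  also have "\<dots> = e / 2" using w by (simp add: t_def)
  finally have "s0 + t *\<^sub>R w \<in> K" using e by auto
  hence "inner (s0 + t *\<^sub>R w) w = 0" by (rule assms(2))
  moreover have "s0 \<in> K" using e by auto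
  hence "inner s0 w = 0" by (rule assms(2))
  ultimately have "t * inner w w = 0" by (simp add: inner_add_left)
  thus False using t w by simp
qed

lemma qf_add_mat: "qf (A + B) a = qf A a + qf B a"
  by (simp add: qf_def matrix_vector_mult_add_rdistrib inner_add_right)
lemma qf_scale_mat: "qf (c *\<^sub>R A) a = c * qf A a"
  by (simp add: qf_def scaleR_matrix_vector_assoc[symmetric])
lemma qf_sum_mat: "qf (\<Sum>i\<in>I. f i) a = (\<Sum>i\<in>I. qf (f i) a)"
  by (induction I rule: infinite_finite_induct) (simp_all add: qf_add_mat, simp_all add: qf_def)

lemma inner_vq: "inner (\<chi> u. qf (Lam u) a) z = qf (LamX Lam z) a"
  by (simp add: LamX_def qf_sum_mat qf_scale_mat inner_vec_def mult.commute)

lemma qf_expand: "qf (M::real^'r^'r) a = (\<Sum>r\<in>UNIV. \<Sum>s\<in>UNIV. a$r * a$s * M$r$s)"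
  by (simp add: qf_def inner_vec_def matrix_vector_mult_def sum_distrib_left mult.commute mult.left_commute)



definition blockv :: "('r \<Rightarrow> 'm) \<Rightarrow> 'm \<Rightarrow> ('r \<Rightarrow> real) \<Rightarrow> real^'r" where
  "blockv blk i c = (\<chi> r. if blk r = i then c r else 0)"

lemma vq_block:
  fixes g :: "'m \<Rightarrow> 'v mpoly" and q :: "'u::finite \<Rightarrow> 'v mpoly" and blk :: "'r::finite \<Rightarrow> 'm"
    and P :: "'r \<Rightarrow> 'v mpoly" and Lam :: "'u \<Rightarrow> real^'r^'r"
  assumes Lam_block: "\<And>r s. blk r = blk s \<Longrightarrow>
                       (\<Sum>u\<in>UNIV. psmult (Lam u $ r $ s) (q u)) = g (blk r) * P r * P s"
  shows "lincomb q (\<chi> u. qf (Lam u) (blockv blk i c)) =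
     g i * (\<Sum>r\<in>{r. blk r = i}. psmult (c r) (P r)) * (\<Sum>r\<in>{r. blk r = i}. psmult (c r) (P r))"
proof -
  define a where "a = blockv blk i c"
  have "lincomb q (\<chi> u. qf (Lam u) a) = (\<Sum>u\<in>UNIV. sc (\<Sum>r\<in>UNIV. \<Sum>s\<in>UNIV. a$r * a$s * Lam u$r$s) * q u)"
    unfolding lincomb_sc qf_expand by simp
  also have "\<dots> = (\<Sum>u\<in>UNIV. \<Sum>r\<in>UNIV. \<Sum>s\<in>UNIV. sc (a$r * a$s) * (sc (Lam u$r$s) * q u))"
    by (rule sum.cong[OF refl]) (simp add: sc_sum sum_distrib_right sc_mult mult.assoc)
  also have "\<dots> = (\<Sum>r\<in>UNIV. \<Sum>s\<in>UNIV. \<Sum>u\<in>UNIV. sc (a$r * a$s) * (sc (Lam u$r$s) * q u))"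
    by (subst sum.swap, rule sum.cong[OF refl], rule sum.swap)
  also have "\<dots> = (\<Sum>r\<in>UNIV. \<Sum>s\<in>UNIV. sc (a$r * a$s) * (\<Sum>u\<in>UNIV. sc (Lam u$r$s) * q u))"
    by (simp add: sum_distrib_left)
  also have "\<dots> = (\<Sum>r\<in>UNIV. \<Sum>s\<in>UNIV. (sc (a$r) * P r) * (sc (a$s) * P s) * g i)"
  proof (intro sum.cong refl)
    fix r s
    show "sc (a$r * a$s) * (\<Sum>u\<in>UNIV. sc (Lam u$r$s) * q u) = (sc (a$r) * P r) * (sc (a$s) * P s) * g i"
    proof (cases "blk r = i \<and> blk s = i")
      case True
      hence "(\<Sum>u\<in>UNIV. sc (Lam u$r$s) * q u) = g i * P r * P s"
        using Lam_block[of r s] by (simp add: psmult_sc)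
      thus ?thesis by (simp add: sc_mult algebra_simps)
    next
      case False
      hence "a$r * a$s = 0" unfolding a_def blockv_def by auto
      hence "sc (a$r) * sc (a$s) = (0::'v mpoly)" using sc_mult[of "a$r" "a$s"] by (metis single_zero)
      hence "sc (a$r) * P r * (sc (a$s) * P s) * g i = 0"
        by (metis (no_types, lifting) mult.commute mult.left_commute mult_zero_left)
      moreover have "sc (a$r * a$s) = (0::'v mpoly)" by (simp only: \<open>a$r * a$s = 0\<close> single_zero)
      ultimately show ?thesis by simp
    qed
  qed
  also have "\<dots> = g i * (\<Sum>r\<in>UNIV. sc (a$r) * P r) * (\<Sum>r\<in>UNIV. sc (a$r) * P r)"
  proof -
    define X where "X = (\<Sum>r\<in>UNIV. sc (a$r) * P r)"
    have "g i * X * X = g i * (X * X)" by (simp add: mult.assoc)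
    also have "X * X = (\<Sum>r\<in>UNIV. \<Sum>s\<in>UNIV. (sc (a$r) * P r) * (sc (a$s) * P s))"
      unfolding X_def by (rule sum_product)
    also have "g i * \<dots> = (\<Sum>r\<in>UNIV. \<Sum>s\<in>UNIV. g i * ((sc (a$r) * P r) * (sc (a$s) * P s)))"
      by (simp add: sum_distrib_left)
    also have "\<dots> = (\<Sum>r\<in>UNIV. \<Sum>s\<in>UNIV. (sc (a$r) * P r) * (sc (a$s) * P s) * g i)"
      by (simp add: mult.commute)
    finally show ?thesis unfolding X_def by simp
  qed
  also have "(\<Sum>r\<in>UNIV. sc (a$r) * P r) = (\<Sum>r\<in>{r. blk r = i}. psmult (c r) (P r))"
  proof -
    have "(\<Sum>r\<in>UNIV. sc (a$r) * P r) = (\<Sum>r\<in>UNIV. if blk r = i then psmult (c r) (P r) else 0)"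
      by (rule sum.cong) (auto simp: a_def blockv_def psmult_sc)
    also have "\<dots> = (\<Sum>r\<in>{r. blk r = i}. psmult (c r) (P r))"
      by (simp add: sum.inter_filter[symmetric])
    finally show ?thesis .
  qed
  finally show ?thesis unfolding a_def .
qed



lemma LamX_entry: "LamX Lam x $ r $ s = (\<Sum>u\<in>UNIV. x$u * Lam u $ r $ s)"
  by (simp add: LamX_def sum_component)

lemma block_decomp:
  fixes M :: "real^'r::finite^'r" and blk :: "'r \<Rightarrow> 'm::finite"
  assumes off: "\<And>r s. blk r \<noteq> blk s \<Longrightarrow> M $ r $ s = 0"
  shows "qf M a = (\<Sum>i\<in>UNIV. qf M (blockv blk i (\<lambda>r. a$r)))"
proof -
  have "(\<Sum>i\<in>UNIV. qf M (blockv blk i (\<lambda>r. a$r))) =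
      (\<Sum>i\<in>UNIV. \<Sum>r\<in>UNIV. \<Sum>s\<in>UNIV. if blk r = i \<and> blk s = i then a$r * a$s * M$r$s else 0)"
    unfolding qf_expand by (intro sum.cong refl) (auto simp: blockv_def)
  also have "\<dots> = (\<Sum>r\<in>UNIV. \<Sum>s\<in>UNIV. \<Sum>i\<in>UNIV. if blk r = i \<and> blk s = i then a$r * a$s * M$r$s else 0)"
    by (subst sum.swap, rule sum.cong[OF refl], rule sum.swap)
  also have "\<dots> = (\<Sum>r\<in>UNIV. \<Sum>s\<in>UNIV. a$r * a$s * M$r$s)"
  proof (intro sum.cong refl)
    fix r s
    have "(\<Sum>i\<in>UNIV. if blk r = i \<and> blk s = i then a$r * a$s * M$r$s else 0) =
        (\<Sum>i\<in>UNIV. if blk r = i then (if blk s = blk r then a$r * a$s * M$r$s else 0) else 0)"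
      by (intro sum.cong refl) auto
    also have "\<dots> = (if blk s = blk r then a$r * a$s * M$r$s else 0)" by simp
    also have "\<dots> = a$r * a$s * M$r$s" using off[of r s] by auto
    finally show "(\<Sum>i\<in>UNIV. if blk r = i \<and> blk s = i then a$r * a$s * M$r$s else 0) = a$r * a$s * M$r$s" .
  qed
  finally show ?thesis unfolding qf_expand by simp
qed

theorem corollary1:
  fixes g :: "'m::finite \<Rightarrow> 'v::finite mpoly"
    and d :: "'m \<Rightarrow> nat"
    and q :: "'u::finite \<Rightarrow> 'v mpoly"
    and blk :: "'r::finite \<Rightarrow> 'm"
    and P :: "'r \<Rightarrow> 'v mpoly"
    and Lam :: "'u \<Rightarrow> real^'r^'r"
    and x y :: "real^'u"
  assumes g_nz: "\<And>i. g i \<noteq> 0"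
    and q_basis: "fam_basis_on UNIV q (Vspace g d)"
    and proper: "proper_cone (Sigma_vec q g d)"
    and P_basis: "\<And>i. fam_basis_on {r. blk r = i} P (polys_le (d i))"
    and Lam_offblock: "\<And>u r s. blk r \<noteq> blk s \<Longrightarrow> Lam u $ r $ s = 0"
    and Lam_block: "\<And>r s. blk r = blk s \<Longrightarrow>
                       (\<Sum>u\<in>UNIV. psmult (Lam u $ r $ s) (q u)) = g (blk r) * P r * P s"
    and x_int: "x \<in> interior (dual_cone (Sigma_vec q g d))"
    and y_int: "y \<in> interior (dual_cone (Sigma_vec q g d))"
    and close: "local_norm Lam x (x - y) < 1/2"
  shows "matrix_inv (hess Lam x) *v (- grad Lam y) \<in> dual_cone (Sigma_vec q g d)"
proof -
  define K where "K = Sigma_vec q g d"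
  define hp where "hp i c = (\<Sum>r\<in>{r. blk r = i}. psmult (c r) (P r))" for i c
  define vq where "vq a = (\<chi> u. qf (Lam u) a)" for a
  define Qp where "Qp v \<longleftrightarrow> (\<forall>z. (\<forall>a. 0 \<le> qf (LamX Lam z) a) \<longrightarrow> 0 \<le> inner v z)" for v
  have linj: "lincomb q a = lincomb q b \<Longrightarrow> a = b" for a b using lincomb_inj[OF q_basis] by blast
  have Pspan: "hp i c \<in> polys_le (d i)" for i c
    using P_basis[of i] unfolding fam_basis_on_def hp_def by blast
  have Pspan2: "\<exists>c. h = hp i c" if "tdeg h \<le> d i" for i h
  proof -
    have "h \<in> polys_le (d i)" using that by (simp add: polys_le_def)
    thus ?thesis using P_basis[of i] unfolding fam_basis_on_def hp_def by blast
  qed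
  have Pind: "\<forall>r\<in>{r. blk r = i}. c r = 0" if "hp i c = 0" for i c
    using P_basis[of i] that unfolding fam_basis_on_def hp_def by blast
  have vqb: "lincomb q (vq (blockv blk i c)) = g i * hp i c * hp i c" for i c
    unfolding vq_def hp_def by (rule vq_block[where blk=blk and g=g and P=P and q=q and Lam=Lam, OF Lam_block])
  have Qvq: "Qp (vq a)" for a unfolding Qp_def vq_def inner_vq by blast
  have Qadd: "Qp v \<Longrightarrow> Qp w \<Longrightarrow> Qp (v + w)" for v w
    unfolding Qp_def by (simp add: inner_add_left)
  have Q0: "Qp 0" unfolding Qp_def by simp
  have listrep: "(\<forall>h\<in>set hs. tdeg h \<le> d i) \<longrightarrow> (\<exists>v. lincomb q v = g i * (\<Sum>h\<leftarrow>hs. h * h) \<and> Qp v)" for hs i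
  proof (induction hs)
    case Nil thus ?case using Q0 by (auto simp: lincomb_zero intro!: exI[of _ 0])
  next
    case (Cons h hs)
    show ?case
    proof
      assume a: "\<forall>h'\<in>set (h # hs). tdeg h' \<le> d i"
      then obtain v' where v': "lincomb q v' = g i * (\<Sum>h\<leftarrow>hs. h * h)" "Qp v'" using Cons by auto
      obtain c where c: "h = hp i c" using Pspan2 a by auto
      have "lincomb q (vq (blockv blk i c) + v') = g i * (\<Sum>h\<leftarrow>h # hs. h * h)"
        unfolding lincomb_add vqb v'(1) c by (simp add: algebra_simps)
      thus "\<exists>v. lincomb q v = g i * (\<Sum>h\<leftarrow>h # hs. h * h) \<and> Qp v" using Qadd[OF Qvq v'(2)] by blast
    qed
  qed
  have setrep: "finite I \<Longrightarrow> \<exists>v. lincomb q v = (\<Sum>i\<in>I. g i * \<sigma> i) \<and> Qp v"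
    if sig: "\<And>i. \<sigma> i \<in> sos_le (d i)" for I \<sigma>
  proof (induction I rule: finite_induct)
    case empty thus ?case using Q0 by (auto simp: lincomb_zero intro!: exI[of _ 0])
  next
    case (insert i I)
    then obtain v' where v': "lincomb q v' = (\<Sum>i\<in>I. g i * \<sigma> i)" "Qp v'" by blast
    obtain hs where hs: "\<sigma> i = (\<Sum>h\<leftarrow>hs. h * h)" "\<forall>h\<in>set hs. tdeg h \<le> d i"
      using sig[of i] unfolding sos_le_def by blast
    obtain v1 where v1: "lincomb q v1 = g i * (\<Sum>h\<leftarrow>hs. h * h)" "Qp v1" using listrep hs(2) by blast
    have "lincomb q (v1 + v') = (\<Sum>i\<in>insert i I. g i * \<sigma> i)"
      using insert(1,2) hs(1) unfolding lincomb_add v1(1) v'(1) by simp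
    thus ?case using Qadd[OF v1(2) v'(2)] by blast
  qed
  have QK: "Qp s" if s: "s \<in> K" for s
  proof -
    have "lincomb q s \<in> WSOS g d" using s unfolding K_def Sigma_vec_def by simp
    then obtain \<sigma> where sig: "lincomb q s = (\<Sum>i\<in>UNIV. g i * \<sigma> i)" "\<And>i. \<sigma> i \<in> sos_le (d i)"
      unfolding WSOS_def by blast
    have "\<exists>v. lincomb q v = (\<Sum>i\<in>UNIV. g i * \<sigma> i) \<and> Qp v" by (rule setrep[OF sig(2)]) simp
    then obtain v where v: "lincomb q v = (\<Sum>i\<in>UNIV. g i * \<sigma> i)" "Qp v" by blast
    have "v = s" by (rule linj) (simp only: v(1) sig(1))
    thus ?thesis using v(2) by simp
  qed
  have vqK: "vq (blockv blk i c) \<in> K" for i c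
  proof -
    define \<sigma> where "\<sigma> j = (if j = i then hp i c * hp i c else 0)" for j
    have sos: "\<sigma> j \<in> sos_le (d j)" for j
    proof (cases "j = i")
      case True
      have "tdeg (hp i c) \<le> d i" using Pspan[of i c] by (simp add: polys_le_def)
      hence "(\<Sum>h\<leftarrow>[hp i c]. h * h) \<in> sos_le (d j)" using True unfolding sos_le_def by fastforce
      thus ?thesis using True \<sigma>_def by simp
    next
      case False
      have "(\<Sum>h\<leftarrow>[]. h * h) \<in> sos_le (d j)" unfolding sos_le_def by fastforce
      thus ?thesis using False \<sigma>_def by simp
    qed
    have eqs: "(\<Sum>j\<in>UNIV. g j * \<sigma> j) = g i * hp i c * hp i c"
    proof -
      have "(\<Sum>j\<in>UNIV. g j * \<sigma> j) = (\<Sum>j\<in>UNIV. if j = i then g i * hp i c * hp i c else 0)"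
        by (rule sum.cong) (auto simp: \<sigma>_def mult.assoc)
      thus ?thesis by simp
    qed
    have "lincomb q (vq (blockv blk i c)) \<in> WSOS g d" unfolding vqb WSOS_def mem_Collect_eq
      by (rule exI[of _ \<sigma>]) (simp add: eqs sos)
    thus ?thesis unfolding K_def Sigma_vec_def by simp
  qed
  have symL: "transpose (Lam u) = Lam u" for u
  proof -
    have "Lam u $ r $ s = Lam u $ s $ r" for r s
    proof (cases "blk r = blk s")
      case True
      have "lincomb q (\<chi> u. Lam u $ r $ s) = lincomb q (\<chi> u. Lam u $ s $ r)"
        unfolding lincomb_def using Lam_block[OF True] Lam_block[OF True[symmetric]] True
        by (simp add: mult.commute mult.left_commute)
      hence "(\<chi> u. Lam u $ r $ s) = (\<chi> u. Lam u $ s $ r)" by (rule linj)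
      thus ?thesis by (metis vec_lambda_beta)
    next
      case False
      thus ?thesis using Lam_offblock[of r s] Lam_offblock[of s r] by auto
    qed
    thus ?thesis by (simp add: transpose_def vec_eq_iff)
  qed
  have inj: "w = 0" if w: "LamX Lam w = 0" for w
  proof (rule interior_orth_zero[of K])
    show "interior K \<noteq> {}" using proper unfolding K_def proper_cone_def by blast
    fix s assume s: "s \<in> K"
    have "0 \<le> inner s w" using QK[OF s] w unfolding Qp_def by (simp add: qf_def)
    moreover have "0 \<le> inner s (- w)"
    proof -
      have "LamX Lam (- w) = 0" using w LamX_neg[of Lam w] by simp
      hence "\<forall>a. 0 \<le> qf (LamX Lam (- w)) a" by (simp add: qf_def)
      thus ?thesis using QK[OF s] unfolding Qp_def by blast
    qed
    ultimately show "inner s w = 0" by simp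
  qed
  have pd: "0 < qf (LamX Lam z) a" if z: "z \<in> interior (dual_cone K)" and a: "a \<noteq> 0" for z a
  proof -
    have zd: "z \<in> dual_cone K" using z interior_subset by blast
    have nn: "0 \<le> qf (LamX Lam z) (blockv blk i (\<lambda>r. a$r))" for i
    proof -
      have "qf (LamX Lam z) (blockv blk i (\<lambda>r. a$r)) = inner (vq (blockv blk i (\<lambda>r. a$r))) z"
        unfolding vq_def inner_vq ..
      also have "\<dots> \<ge> 0" using zd vqK unfolding dual_cone_def by blast
      finally show ?thesis .
    qed
    obtain r0 where r0: "a $ r0 \<noteq> 0" using a by (metis vec_eq_iff zero_index)
    define i0 where "i0 = blk r0"
    have "hp i0 (\<lambda>r. a$r) \<noteq> 0" using Pind[of i0 "\<lambda>r. a$r"] r0 i0_def by auto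
    hence "g i0 * hp i0 (\<lambda>r. a$r) * hp i0 (\<lambda>r. a$r) \<noteq> 0"
      using g_nz[of i0] mpoly_nzd[of "g i0" "hp i0 (\<lambda>r. a$r)"] mpoly_nzd[of "g i0 * hp i0 (\<lambda>r. a$r)" "hp i0 (\<lambda>r. a$r)"] by blast
    hence "vq (blockv blk i0 (\<lambda>r. a$r)) \<noteq> 0" using vqb[of i0 "\<lambda>r. a$r"] lincomb_zero[of q] by metis
    hence pos: "0 < qf (LamX Lam z) (blockv blk i0 (\<lambda>r. a$r))"
      using dual_pos[OF z vqK] unfolding vq_def inner_vq by blast
    have "qf (LamX Lam z) a = (\<Sum>i\<in>UNIV. qf (LamX Lam z) (blockv blk i (\<lambda>r. a$r)))"
      by (rule block_decomp) (simp add: LamX_entry Lam_offblock)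
    also have "\<dots> > 0" using pos nn by (intro sum_pos2[of UNIV i0]) auto
    finally show ?thesis .
  qed
  have main: "0 \<le> qf (LamX Lam (matrix_inv (hess Lam x) *v (- grad Lam y))) a" for a
  proof -
    have xi: "x \<in> interior (dual_cone K)" and yi: "y \<in> interior (dual_cone K)"
      using x_int y_int unfolding K_def by auto
    show ?thesis by (rule matrix_main[OF symL inj pd[OF xi] pd[OF yi] close])
  qed
  show ?thesis unfolding dual_cone_def
  proof (rule CollectI, rule ballI)
    fix s assume "s \<in> Sigma_vec q g d"
    hence "Qp s" using QK unfolding K_def by blast
    thus "0 \<le> inner s (matrix_inv (hess Lam x) *v (- grad Lam y))" using main unfolding Qp_def by blast
  qed
qed

end
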